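(* Let $\gamma=(\gamma_1,\dots,\gamma_b)$ be a parallel map on $V=V_1\oplus\cdots\oplus V_b$, $V_i\cong(\mathbb F_2)^m$, with $0\gamma=0$. Suppose every $\gamma_i$ is differentially $2^r$-uniform with $r<m-1$ and strongly $r$-anti-invariant. If $\gamma$ maps $\mathcal{LA}_U(W_1|W_2)$ onto a non-trivial partition $\mathcal L(W)$, then $W_1$, $W_2$, $W$ are walls and $W_1=W_2=W$; in particular $\mathcal{LA}_U(W_1|W_2)$ is linear.
   Context: Let $m,b>1$, $n=mb$, $V=(\mathbb F_2)^n=V_1\oplus\cdots\oplus V_b$, $V_i\cong(\mathbb F_2)^m$. Permutations act on the right. A parallel map is $\gamma\in\mathrm{Sym}(V)$ with $(v_1\oplus\cdots\oplus v_b)\gamma=v_1\gamma_1\oplus\cdots\oplus v_b\gamma_b$, $\gamma_i\in\mathrm{Sym}(V_i)$. A wall is $\bigoplus_{i\in I}V_i$ with $\emptyset\ne I\subsetneq\{1,\dots,b\}$. $f:(\mathbb F_2)^m\to(\mathbb F_2)^m$ is differentially $\delta$-uniform if $\delta=\max_{a\ne0,b}|\{x:f(x+a)+f(x)=b\}|$; for $f(0)=0$ and $1\le r<m$, $f$ is strongly $r$-anti-invariant if for all subspaces $U',W'$ with $f(U')=W'$, either $\dim U'=\dim W'<m-r$ or $U'=W'=(\mathbb F_2)^m$. A permutation maps $\mathcal A$ onto $\mathcal B$ if it sends the blocks of $\mathcal A$ exactly onto those of $\mathcal B$; trivial partitions are the singleton partition and $\{V\}$. $\mathcal L(W)=\{W+v:v\in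 V\}$. For a subspace $U$ of dimension $n-1$ and subspaces $W_1,W_2\subseteq U$, $\mathcal{LA}_U(W_1|W_2)=\{W_1+v:v\in U\}\cup\{(W_2+\bar v)+v:v\in U\}$ for any $\bar v\in V\setminus U$. *)

theory Defs
  imports Main
begin

text \<open>Vectors over F_2 are represented as boolean-valued functions; addition is pointwise xor.
  (F_2)^m is represented by functions nat => bool vanishing at indices >= m.
  V = V_1 + ... + V_b is represented by functions on pairs (i,j) (block i < b, coordinate j < m),
  vanishing outside; the block component of v in V_i is (%j. v (i,j)).  Blocks are indexed 0..b-1.\<close>

definition xadd :: "('a \<Rightarrow> bool) \<Rightarrow> ('a \<Rightarrow> bool) \<Rightarrow> ('a \<Rightarrow> bool)" where
  "xadd x y = (\<lambda>k. x k \<noteq> y k)"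

definition xzero :: "'a \<Rightarrow> bool" where
  "xzero = (\<lambda>_. False)"

definition Fm :: "nat \<Rightarrow> (nat \<Rightarrow> bool) set" where
  "Fm m = {y. \<forall>j. m \<le> j \<longrightarrow> \<not> y j}"

definition Vsp :: "nat \<Rightarrow> nat \<Rightarrow> (nat \<times> nat \<Rightarrow> bool) set" where
  "Vsp m b = {v. \<forall>i j. (b \<le> i \<or> m \<le> j) \<longrightarrow> \<not> v (i, j)}"

text \<open>Subspaces of an ambient F_2-space S (closure under addition suffices over F_2).\<close>
definition is_subspace :: "('a \<Rightarrow> bool) set \<Rightarrow> ('a \<Rightarrow> bool) set \<Rightarrow> bool" where
  "is_subspace S U \<longleftrightarrow> U \<subseteq> S \<and> xzero \<in> U \<and> (\<forall>x\<in>U. \<forall>y\<in>U. xadd x y \<in> U)"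

definition sdim :: "('a \<Rightarrow> bool) set \<Rightarrow> nat" where
  "sdim U = (THE d. card U = 2 ^ d)"

definition parmap :: "nat \<Rightarrow> nat \<Rightarrow> (nat \<Rightarrow> (nat \<Rightarrow> bool) \<Rightarrow> (nat \<Rightarrow> bool))
    \<Rightarrow> (nat \<times> nat \<Rightarrow> bool) \<Rightarrow> (nat \<times> nat \<Rightarrow> bool)" where
  "parmap m b g v = (\<lambda>(i, j). if i < b \<and> j < m then g i (\<lambda>j'. v (i, j')) j else False)"

definition diff_uniform :: "nat \<Rightarrow> ((nat \<Rightarrow> bool) \<Rightarrow> (nat \<Rightarrow> bool)) \<Rightarrow> nat \<Rightarrow> bool" where
  "diff_uniform m f \<delta> \<longleftrightarrow>
     \<delta> = Max {card {x \<in> Fm m. xadd (f (xadd x a)) (f x) = c} | a c.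
                a \<in> Fm m \<and> a \<noteq> xzero \<and> c \<in> Fm m}"

definition strongly_anti_invariant :: "nat \<Rightarrow> ((nat \<Rightarrow> bool) \<Rightarrow> (nat \<Rightarrow> bool)) \<Rightarrow> nat \<Rightarrow> bool" where
  "strongly_anti_invariant m f r \<longleftrightarrow>
     f xzero = xzero \<and> 1 \<le> r \<and> r < m \<and>
     (\<forall>U' W'. is_subspace (Fm m) U' \<and> is_subspace (Fm m) W' \<and> f ` U' = W' \<longrightarrow>
        (sdim U' = sdim W' \<and> sdim W' < m - r) \<or> (U' = Fm m \<and> W' = Fm m))"

definition wall :: "nat \<Rightarrow> nat \<Rightarrow> (nat \<times> nat \<Rightarrow> bool) set \<Rightarrow> bool" where
  "wall m b W \<longleftrightarrow> (\<exists>I. I \<noteq> {} \<and> I \<subset> {..<b} \<and>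
       W = {v \<in> Vsp m b. \<forall>i j. i \<notin> I \<longrightarrow> \<not> v (i, j)})"

definition coset :: "('a \<Rightarrow> bool) set \<Rightarrow> ('a \<Rightarrow> bool) \<Rightarrow> ('a \<Rightarrow> bool) set" where
  "coset W v = (\<lambda>w. xadd w v) ` W"

definition Lpart :: "nat \<Rightarrow> nat \<Rightarrow> (nat \<times> nat \<Rightarrow> bool) set \<Rightarrow> (nat \<times> nat \<Rightarrow> bool) set set" where
  "Lpart m b W = {coset W v | v. v \<in> Vsp m b}"

definition LA :: "nat \<Rightarrow> nat \<Rightarrow> (nat \<times> nat \<Rightarrow> bool) set \<Rightarrow> (nat \<times> nat \<Rightarrow> bool) set
    \<Rightarrow> (nat \<times> nat \<Rightarrow> bool) set \<Rightarrow> (nat \<times> nat \<Rightarrow> bool) set set" where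
  "LA m b U W1 W2 = (let vbar = (SOME x. x \<in> Vsp m b - U) in
      {coset W1 v | v. v \<in> U} \<union> {coset (coset W2 vbar) v | v. v \<in> U})"

definition maps_onto :: "('a \<Rightarrow> 'a) \<Rightarrow> 'a set set \<Rightarrow> 'a set set \<Rightarrow> bool" where
  "maps_onto f A B \<longleftrightarrow> (\<lambda>X. f ` X) ` A = B"

end

theory Submission
  imports Defs
begin


lemma xadd_comm: "xadd x y = xadd y x" by (auto simp: xadd_def fun_eq_iff)
lemma xadd_assoc: "xadd (xadd x y) z = xadd x (xadd y z)" by (auto simp: xadd_def fun_eq_iff)
lemma xadd_self[simp]: "xadd x x = xzero" by (auto simp: xadd_def xzero_def fun_eq_iff)
lemma xadd_zero[simp]: "xadd x xzero = x" "xadd xzero x = x" by (auto simp: xadd_def xzero_def fun_eq_iff)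
lemma xadd_cancel1[simp]: "xadd (xadd x y) y = x" "xadd x (xadd x y) = y" by (auto simp: xadd_def fun_eq_iff)
lemma xadd_cancel2[simp]: "xadd (xadd y x) y = x" "xadd x (xadd y x) = y" by (auto simp: xadd_def fun_eq_iff)
lemma xadd_eq_zero: "xadd x y = xzero \<longleftrightarrow> x = y" by (auto simp: xadd_def xzero_def fun_eq_iff)
lemma xadd_left_inj[simp]: "xadd x y = xadd x z \<longleftrightarrow> y = z" by (auto simp: xadd_def fun_eq_iff)
lemma xadd_right_inj[simp]: "xadd y x = xadd z x \<longleftrightarrow> y = z" by (auto simp: xadd_def fun_eq_iff)

definition supp_set :: "'a set \<Rightarrow> ('a \<Rightarrow> bool) set" where
  "supp_set K = {v. \<forall>k. k \<notin> K \<longrightarrow> \<not> v k}"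

lemma card_supp_set:
  assumes "finite K" shows "finite (supp_set K)" "card (supp_set K) = 2 ^ card K"
proof -
  have bb: "bij_betw (\<lambda>A k. k \<in> A) (Pow K) (supp_set K)"
  proof (rule bij_betw_byWitness[where f'="\<lambda>v. {k. v k}"])
    show "(\<lambda>A k. k \<in> A) ` Pow K \<subseteq> supp_set K" by (auto simp: supp_set_def)
    show "(\<lambda>v. {k. v k}) ` supp_set K \<subseteq> Pow K" by (auto simp: supp_set_def)
    show "\<forall>x \<in> Pow K. {k. k \<in> x} = x" by simp
    show "\<forall>y \<in> supp_set K. (\<lambda>k. k \<in> {k. y k}) = y" by simp
  qed
  have "card (Pow K) = card (supp_set K)" using bij_betw_same_card[OF bb] .
  then show "card (supp_set K) = 2 ^ card K" using card_Pow[OF assms] by simp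
  have "finite (Pow K)" using assms by simp
  then show "finite (supp_set K)" using bij_betw_finite[OF bb] by simp
qed

lemma supp_empty: "supp_set {} = {xzero}" by (auto simp: supp_set_def xzero_def)

lemma subspace_pow2:
  assumes "finite K" "xzero \<in> S" "\<forall>x\<in>S. \<forall>y\<in>S. xadd x y \<in> S" "S \<subseteq> supp_set K"
  shows "\<exists>d. card S = 2 ^ d"
  using assms
proof (induction K arbitrary: S rule: finite_induct)
  case empty
  then have "S = {xzero}" using supp_empty by auto
  then show ?case by (intro exI[of _ 0]) simp
next
  case (insert k K)
  show ?case
  proof (cases "\<forall>s\<in>S. \<not> s k")
    case True
    have "S \<subseteq> supp_set K"
    proof
      fix s assume s: "s \<in> S"
      have A: "\<forall>j. j \<notin> insert k K \<longrightarrow> \<not> s j" using subsetD[OF insert.prems(3) s] unfolding supp_set_def by simp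
      have B: "\<not> s k" using True s by blast
      have "\<forall>j. j \<notin> K \<longrightarrow> \<not> s j"
      proof (intro allI impI)
        fix j assume "j \<notin> K"
        then show "\<not> s j" using A B by (cases "j = k") auto
      qed
      then show "s \<in> supp_set K" unfolding supp_set_def by simp
    qed
    then show ?thesis using insert.prems(1,2) by (intro insert.IH[of S]) auto
  next
    case False
    then obtain s0 where s0: "s0 \<in> S" "s0 k" by auto
    define S' where "S' = {s\<in>S. \<not> s k}"
    have 1: "xzero \<in> S'" using insert.prems(1) by (auto simp: S'_def xzero_def)
    have 2: "\<forall>x\<in>S'. \<forall>y\<in>S'. xadd x y \<in> S'" using insert.prems(2) by (auto simp: S'_def xadd_def)
    have 3: "S' \<subseteq> supp_set K"
    proof
      fix s assume s: "s \<in> S'"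
      have sS: "s \<in> S" and B: "\<not> s k" using s by (auto simp: S'_def)
      have A: "\<forall>j. j \<notin> insert k K \<longrightarrow> \<not> s j" using subsetD[OF insert.prems(3) sS] unfolding supp_set_def by simp
      have "\<forall>j. j \<notin> K \<longrightarrow> \<not> s j"
      proof (intro allI impI)
        fix j assume "j \<notin> K"
        then show "\<not> s j" using A B by (cases "j = k") auto
      qed
      then show "s \<in> supp_set K" unfolding supp_set_def by simp
    qed
    from insert.IH[of S', OF 1 2 3] obtain d where d: "card S' = 2 ^ d" by blast
    then have "card S' > 0" by simp
    then have fin: "finite S'" using card_gt_0_iff by blast
    have SU: "S = S' \<union> (\<lambda>s. xadd s s0) ` S'"
    proof (rule set_eqI, rule iffI)
      fix x assume x: "x \<in> S"
      show "x \<in> S' \<union> (\<lambda>s. xadd s s0) ` S'"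
      proof (cases "x k")
        case True
        have "xadd x s0 \<in> S" using x s0(1) insert.prems(2) by blast
        then have xs: "xadd x s0 \<in> S'" using s0(2) True by (simp add: S'_def xadd_def)
        have "x \<in> (\<lambda>s. xadd s s0) ` S'" by (rule image_eqI[OF _ xs]) simp
        then show ?thesis by (rule UnI2)
      next
        case False
        then show ?thesis using x by (simp add: S'_def)
      qed
    next
      fix x assume x: "x \<in> S' \<union> (\<lambda>s. xadd s s0) ` S'"
      show "x \<in> S"
      proof (cases "x \<in> S'")
        case True then show ?thesis by (simp add: S'_def)
      next
        case False
        then obtain s where s: "s \<in> S'" "x = xadd s s0" using x by blast
        have "s \<in> S" using s(1) by (simp add: S'_def)
        then show ?thesis using s(2) s0(1) insert.prems(2) by blast
      qed
    qed
    have disj: "S' \<inter> (\<lambda>s. xadd s s0) ` S' = {}" using s0 by (auto simp: S'_def xadd_def)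
    have inj: "inj_on (\<lambda>s. xadd s s0) S'" by (auto simp: inj_on_def)
    have "card (S' \<union> (\<lambda>s. xadd s s0) ` S') = card S' + card ((\<lambda>s. xadd s s0) ` S')"
      by (rule card_Un_disjoint) (use fin disj in auto)
    also have "\<dots> = 2 ^ Suc d" using card_image[OF inj] d by simp
    finally show ?thesis using SU by metis
  qed
qed

lemma Fm_supp: "Fm m = supp_set {..<m}" by (auto simp: Fm_def supp_set_def)
lemma Vsp_supp: "Vsp m b = supp_set ({..<b} \<times> {..<m})" by (auto simp: Vsp_def supp_set_def)

lemma card_Fm: "card (Fm m) = 2 ^ m" "finite (Fm m)"
  using card_supp_set[of "{..<m}"] by (simp_all add: Fm_supp)

lemma card_Vsp: "card (Vsp m b) = 2 ^ (m * b)" "finite (Vsp m b)"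
  using card_supp_set[of "{..<b} \<times> {..<m}"] by (simp_all add: Vsp_supp card_cartesian_product mult.commute)

lemma sdim_eq: "card S = 2 ^ d \<Longrightarrow> sdim S = d"
  unfolding sdim_def by (rule the_equality) auto

lemma subspace_Fm_pow2: "is_subspace (Fm m) S \<Longrightarrow> \<exists>d. card S = 2 ^ d \<and> sdim S = d"
  using subspace_pow2[of "{..<m}" S] sdim_eq unfolding is_subspace_def Fm_supp by blast

lemma subspace_Vsp_pow2: "is_subspace (Vsp m b) S \<Longrightarrow> \<exists>d. card S = 2 ^ d \<and> sdim S = d"
  using subspace_pow2[of "{..<b} \<times> {..<m}" S] sdim_eq unfolding is_subspace_def Vsp_supp by blast

lemma coset_mem: "z \<in> coset W v \<longleftrightarrow> xadd z v \<in> W"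
  unfolding coset_def by (auto intro: image_eqI[where x="xadd z v"])

lemma card_coset: "card (coset W v) = card W"
  unfolding coset_def by (rule card_image) (auto simp: inj_on_def)

lemma coset_sum: "is_subspace S W \<Longrightarrow> x \<in> coset W v \<Longrightarrow> y \<in> coset W v \<Longrightarrow> xadd x y \<in> W"
proof -
  assume W: "is_subspace S W" and x: "x \<in> coset W v" and y: "y \<in> coset W v"
  have "xadd (xadd x v) (xadd y v) \<in> W" using W x y unfolding coset_mem is_subspace_def by blast
  moreover have "xadd (xadd x v) (xadd y v) = xadd x y" by (auto simp: xadd_def fun_eq_iff)
  ultimately show ?thesis by simp
qed

lemma coset_self: "is_subspace S W \<Longrightarrow> v \<in> W \<Longrightarrow> coset W v = W"
proof -
  assume W: "is_subspace S W" and v: "v \<in> W"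
  show ?thesis
  proof
    show "coset W v \<subseteq> W"
    proof
      fix z assume "z \<in> coset W v"
      then have "xadd z v \<in> W" by (simp add: coset_mem)
      then have "xadd (xadd z v) v \<in> W" using W v unfolding is_subspace_def by blast
      then show "z \<in> W" by simp
    qed
    show "W \<subseteq> coset W v"
    proof
      fix z assume "z \<in> W"
      then have "xadd z v \<in> W" using W v unfolding is_subspace_def by blast
      then show "z \<in> coset W v" by (simp add: coset_mem)
    qed
  qed
qed

lemma coset_zero[simp]: "coset W xzero = W" unfolding coset_def by simp

lemma coset_coset: "coset (coset W x) y = coset W (xadd x y)"
  unfolding coset_def image_image by (simp add: xadd_assoc)

lemma count_fibres:
  assumes "finite A" "\<forall>c\<in>f ` A. card {x\<in>A. f x = c} \<le> k"
  shows "card A \<le> k * card (f ` A)"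
proof -
  have U: "(\<Union>c\<in>f ` A. {x\<in>A. f x = c}) = A" by auto
  have "card (\<Union>c\<in>f ` A. {x\<in>A. f x = c}) \<le> (\<Sum>c\<in>f ` A. card {x\<in>A. f x = c})"
    by (rule card_UN_le) (simp add: assms(1))
  then have 1: "card A \<le> (\<Sum>c\<in>f ` A. card {x\<in>A. f x = c})" unfolding U .
  have "(\<Sum>c\<in>f ` A. card {x\<in>A. f x = c}) \<le> (\<Sum>c\<in>f ` A. k)"
    by (rule sum_mono) (use assms(2) in blast)
  also have "\<dots> = k * card (f ` A)" by simp
  finally show ?thesis using 1 by linarith
qed



definition blk :: "(nat \<times> nat \<Rightarrow> bool) \<Rightarrow> nat \<Rightarrow> (nat \<Rightarrow> bool)" where
  "blk v i = (\<lambda>j. v (i, j))"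
definition emb :: "nat \<Rightarrow> (nat \<Rightarrow> bool) \<Rightarrow> (nat \<times> nat \<Rightarrow> bool)" where
  "emb i y = (\<lambda>(k, j). k = i \<and> y j)"

lemma blk_xadd: "blk (xadd v w) i = xadd (blk v i) (blk w i)" by (simp add: blk_def xadd_def)
lemma blk_zero[simp]: "blk xzero i = xzero" by (simp add: blk_def xzero_def)
lemma emb_xadd: "emb i (xadd y z) = xadd (emb i y) (emb i z)" by (auto simp: emb_def xadd_def fun_eq_iff)
lemma emb_zero[simp]: "emb i xzero = xzero" by (auto simp: emb_def xzero_def fun_eq_iff)
lemma blk_emb: "blk (emb i y) k = (if k = i then y else xzero)" by (auto simp: emb_def blk_def xzero_def fun_eq_iff)
lemma blk_Vsp: "v \<in> Vsp m b \<Longrightarrow> blk v i \<in> Fm m" by (simp add: Vsp_def Fm_def blk_def)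
lemma blk_Vsp_out: "v \<in> Vsp m b \<Longrightarrow> b \<le> i \<Longrightarrow> blk v i = xzero" by (auto simp: Vsp_def blk_def xzero_def)
lemma emb_Vsp: "y \<in> Fm m \<Longrightarrow> i < b \<Longrightarrow> emb i y \<in> Vsp m b" by (auto simp: Vsp_def Fm_def emb_def)
lemma xadd_Fm: "x \<in> Fm m \<Longrightarrow> y \<in> Fm m \<Longrightarrow> xadd x y \<in> Fm m" by (auto simp: Fm_def xadd_def)
lemma xzero_Fm[simp]: "xzero \<in> Fm m" by (auto simp: Fm_def xzero_def)
lemma xadd_Vsp: "x \<in> Vsp m b \<Longrightarrow> y \<in> Vsp m b \<Longrightarrow> xadd x y \<in> Vsp m b" by (auto simp: Vsp_def xadd_def)
lemma xzero_Vsp[simp]: "xzero \<in> Vsp m b" by (auto simp: Vsp_def xzero_def)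
lemma emb_inj: "emb i y = emb i z \<Longrightarrow> y = z" by (auto simp: emb_def fun_eq_iff)

lemma blk_zero_iff: "blk v i = xzero \<longleftrightarrow> (\<forall>j. \<not> v (i, j))" by (auto simp: blk_def xzero_def fun_eq_iff)

lemma Vsp_eqI:
  assumes "v \<in> Vsp m b" "w \<in> Vsp m b" "\<forall>i<b. blk v i = blk w i" shows "v = w"
proof (rule ext, clarify)
  fix i j
  show "v (i, j) = w (i, j)"
  proof (cases "i < b")
    case True
    then have "blk v i j = blk w i j" using assms(3) by simp
    then show ?thesis by (simp add: blk_def)
  next
    case False
    then have "blk v i = blk w i" using blk_Vsp_out[OF assms(1)] blk_Vsp_out[OF assms(2)] by simp
    then have "blk v i j = blk w i j" by simp
    then show ?thesis by (simp add: blk_def)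
  qed
qed

lemma Vsp_decomp:
  assumes v: "v \<in> Vsp m b" and S: "xzero \<in> S" "\<forall>x\<in>S. \<forall>y\<in>S. xadd x y \<in> S"
    and e: "\<forall>k<b. emb k (blk v k) \<in> S"
  shows "v \<in> S"
proof -
  define tr where "tr k = (\<lambda>p. fst p < k \<and> v p)" for k
  have "k \<le> b \<Longrightarrow> tr k \<in> S" for k
  proof (induction k)
    case 0
    have "tr 0 = xzero" unfolding tr_def xzero_def by simp
    then show ?case using S(1) by simp
  next
    case (Suc k)
    have eq: "tr (Suc k) = xadd (tr k) (emb k (blk v k))"
    proof (rule ext)
      fix p :: "nat \<times> nat"
      obtain i j where p: "p = (i, j)" by (cases p)
      show "tr (Suc k) p = xadd (tr k) (emb k (blk v k)) p"
        unfolding p tr_def xadd_def emb_def blk_def by (cases "i = k") auto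
    qed
    have 1: "tr k \<in> S" using Suc by simp
    have 2: "emb k (blk v k) \<in> S" using e Suc.prems by simp
    show ?case unfolding eq using S(2) 1 2 by blast
  qed
  then have "tr b \<in> S" by simp
  moreover have "tr b = v"
  proof (rule ext)
    fix p :: "nat \<times> nat"
    obtain i j where p: "p = (i, j)" by (cases p)
    show "tr b p = v p"
    proof (cases "i < b")
      case False
      then have "\<not> v (i, j)" using v by (simp add: Vsp_def not_less)
      then show ?thesis unfolding p tr_def by simp
    qed (simp add: p tr_def)
  qed
  ultimately show ?thesis by simp
qed

locale LS =
  fixes m b r :: nat
    and g :: "nat \<Rightarrow> (nat \<Rightarrow> bool) \<Rightarrow> (nat \<Rightarrow> bool)"
    and U W1 W2 W :: "(nat \<times> nat \<Rightarrow> bool) set"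
  assumes m1: "1 < m" and b1: "1 < b"
    and perm: "\<forall>i<b. bij_betw (g i) (Fm m) (Fm m)"
    and zero: "parmap m b g xzero = xzero"
    and du: "\<forall>i<b. diff_uniform m (g i) (2 ^ r)"
    and rm: "r < m - 1"
    and sai: "\<forall>i<b. strongly_anti_invariant m (g i) r"
    and Usub: "is_subspace (Vsp m b) U" and Udim: "sdim U = m * b - 1"
    and W1sub: "is_subspace (Vsp m b) W1" and W1U: "W1 \<subseteq> U"
    and W2sub: "is_subspace (Vsp m b) W2" and W2U: "W2 \<subseteq> U"
    and Wsub: "is_subspace (Vsp m b) W" and Wnz: "W \<noteq> {xzero}" and Wnf: "W \<noteq> Vsp m b"
    and maps: "maps_onto (parmap m b g) (LA m b U W1 W2) (Lpart m b W)"
begin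

abbreviation "gm \<equiv> parmap m b g"

lemma g_Fm: "i < b \<Longrightarrow> y \<in> Fm m \<Longrightarrow> g i y \<in> Fm m"
  using perm bij_betwE by blast
lemma g_inj: "i < b \<Longrightarrow> y \<in> Fm m \<Longrightarrow> z \<in> Fm m \<Longrightarrow> g i y = g i z \<Longrightarrow> y = z"
  using perm by (meson bij_betw_def inj_onD)
lemma g0: "i < b \<Longrightarrow> g i xzero = xzero"
  using sai by (simp add: strongly_anti_invariant_def)

lemma gm_Vsp: "gm v \<in> Vsp m b" by (auto simp: parmap_def Vsp_def)

lemma blk_gm: "v \<in> Vsp m b \<Longrightarrow> i < b \<Longrightarrow> blk (gm v) i = g i (blk v i)"
proof (rule ext)
  fix j assume v: "v \<in> Vsp m b" and i: "i < b"
  have "g i (blk v i) \<in> Fm m" using g_Fm[OF i blk_Vsp[OF v]] .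
  then show "blk (gm v) i j = g i (blk v i) j"
    using i by (auto simp: parmap_def blk_def Fm_def)
qed

lemma gm_inj:
  assumes v: "v \<in> Vsp m b" and w: "w \<in> Vsp m b" and eq: "gm v = gm w" shows "v = w"
proof (rule Vsp_eqI[OF v w], intro allI impI)
  fix i assume i: "i < b"
  have "blk (gm v) i = blk (gm w) i" using eq by simp
  then have "g i (blk v i) = g i (blk w i)" using blk_gm[OF v i] blk_gm[OF w i] by simp
  then show "blk v i = blk w i" by (rule g_inj[OF i blk_Vsp[OF v] blk_Vsp[OF w]])
qed

lemma gm_inj_on: "inj_on gm (Vsp m b)" using gm_inj by (auto simp: inj_on_def)

lemma gm_emb:
  assumes i: "i < b" and y: "y \<in> Fm m" shows "gm (emb i y) = emb i (g i y)"
proof (rule Vsp_eqI[OF gm_Vsp emb_Vsp[OF g_Fm[OF i y] i]], intro allI impI)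
  fix k assume k: "k < b"
  show "blk (gm (emb i y)) k = blk (emb i (g i y)) k"
    unfolding blk_gm[OF emb_Vsp[OF y i] k] blk_emb using g0[OF k] by simp
qed

lemma sub_facts:
  "xzero \<in> U" "xzero \<in> W1" "xzero \<in> W2" "xzero \<in> W"
  "U \<subseteq> Vsp m b" "W1 \<subseteq> Vsp m b" "W2 \<subseteq> Vsp m b" "W \<subseteq> Vsp m b"
  "x \<in> U \<Longrightarrow> y \<in> U \<Longrightarrow> xadd x y \<in> U"
  "x \<in> W1 \<Longrightarrow> y \<in> W1 \<Longrightarrow> xadd x y \<in> W1"
  "x \<in> W2 \<Longrightarrow> y \<in> W2 \<Longrightarrow> xadd x y \<in> W2"
  "x \<in> W \<Longrightarrow> y \<in> W \<Longrightarrow> xadd x y \<in> W"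
  using Usub W1sub W2sub Wsub unfolding is_subspace_def by auto

lemma fins: "finite U" "finite W1" "finite W2" "finite W"
  using finite_subset[OF sub_facts(5) card_Vsp(2)] finite_subset[OF sub_facts(6) card_Vsp(2)]
    finite_subset[OF sub_facts(7) card_Vsp(2)] finite_subset[OF sub_facts(8) card_Vsp(2)] by auto

lemma LA_img: "B \<in> LA m b U W1 W2 \<Longrightarrow> \<exists>v\<in>Vsp m b. gm ` B = coset W v"
proof -
  assume B: "B \<in> LA m b U W1 W2"
  have "gm ` B \<in> (\<lambda>X. gm ` X) ` LA m b U W1 W2" using B by (rule imageI)
  then have "gm ` B \<in> {coset W v | v. v \<in> Vsp m b}" using maps unfolding maps_onto_def Lpart_def by simp
  then show ?thesis by blast
qed

lemma gm_W1: "gm ` W1 = W"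
proof -
  have "coset W1 xzero \<in> LA m b U W1 W2" unfolding LA_def Let_def using sub_facts(1) by blast
  from LA_img[OF this] obtain v where v: "v \<in> Vsp m b" "gm ` W1 = coset W v" by auto
  have "gm xzero \<in> gm ` W1" using sub_facts(2) by (rule imageI)
  then have "gm xzero \<in> coset W v" using v(2) by simp
  then have "xadd (gm xzero) v \<in> W" by (simp only: coset_mem)
  then have vW: "v \<in> W" unfolding zero by simp
  have "coset W v = W" by (rule coset_self[OF Wsub vW])
  then show ?thesis using v(2) by simp
qed

lemma card_W1: "card W = card W1"
proof -
  have inj: "inj_on gm W1" using gm_inj_on sub_facts(6) by (rule inj_on_subset)
  show ?thesis using card_image[OF inj] gm_W1 by simp
qed

lemma sameU: "u \<in> U \<Longrightarrow> a \<in> W1 \<Longrightarrow> xadd (gm u) (gm (xadd u a)) \<in> W"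
proof -
  assume u: "u \<in> U" and a: "a \<in> W1"
  have "coset W1 u \<in> LA m b U W1 W2" unfolding LA_def Let_def using u by blast
  from LA_img[OF this] obtain v where v: "gm ` coset W1 u = coset W v" by auto
  have "u \<in> coset W1 u" by (simp add: coset_mem sub_facts(2))
  then have "gm u \<in> gm ` coset W1 u" by (rule imageI)
  then have 1: "gm u \<in> coset W v" using v by simp
  have "xadd u a \<in> coset W1 u" using a by (simp add: coset_mem)
  then have "gm (xadd u a) \<in> gm ` coset W1 u" by (rule imageI)
  then have 2: "gm (xadd u a) \<in> coset W v" using v by simp
  show ?thesis by (rule coset_sum[OF Wsub 1 2])
qed

definition vbar where "vbar = (SOME x. x \<in> Vsp m b - U)"

lemma cardU: "card U = 2 ^ (m * b - 1)"
  using subspace_Vsp_pow2[OF Usub] Udim by auto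

lemma mb: "2 \<le> m * b - 1"
proof -
  have "2 * 2 \<le> m * b" using m1 b1 by (intro mult_mono) auto
  then show ?thesis by simp
qed

lemma U_ne: "U \<noteq> Vsp m b"
proof
  assume "U = Vsp m b"
  then have "(2::nat) ^ (m * b - 1) = 2 ^ (m * b)" using cardU card_Vsp by simp
  then show False using mb by simp
qed

lemma vbar: "vbar \<in> Vsp m b" "vbar \<notin> U"
proof -
  have "\<exists>x. x \<in> Vsp m b - U" using U_ne sub_facts(5) by blast
  then have "vbar \<in> Vsp m b - U" unfolding vbar_def by (rule someI_ex)
  then show "vbar \<in> Vsp m b" "vbar \<notin> U" by auto
qed

lemma sameW2: "a \<in> W2 \<Longrightarrow> xadd (gm vbar) (gm (xadd vbar a)) \<in> W"
proof -
  assume a: "a \<in> W2"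
  have "coset (coset W2 vbar) xzero \<in> LA m b U W1 W2" unfolding LA_def Let_def vbar_def
    using sub_facts(1) by blast
  from LA_img[OF this] obtain v where v: "gm ` coset W2 vbar = coset W v" by auto
  have "vbar \<in> coset W2 vbar" by (simp add: coset_mem sub_facts(3))
  then have "gm vbar \<in> gm ` coset W2 vbar" by (rule imageI)
  then have 1: "gm vbar \<in> coset W v" using v by simp
  have "xadd vbar a \<in> coset W2 vbar" using a by (simp add: coset_mem)
  then have "gm (xadd vbar a) \<in> gm ` coset W2 vbar" by (rule imageI)
  then have 2: "gm (xadd vbar a) \<in> coset W v" using v by simp
  show ?thesis by (rule coset_sum[OF Wsub 1 2])
qed

lemma card_W2: "card W2 = card W"
proof -
  have "coset (coset W2 vbar) xzero \<in> LA m b U W1 W2" unfolding LA_def Let_def vbar_def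
    using sub_facts(1) by blast
  from LA_img[OF this] obtain v where v: "gm ` coset W2 vbar = coset W v" by auto
  have "coset W2 vbar \<subseteq> Vsp m b" using sub_facts(7) vbar(1) xadd_Vsp by (auto simp: coset_def)
  then have "card (gm ` coset W2 vbar) = card (coset W2 vbar)"
    using card_image[OF inj_on_subset[OF gm_inj_on]] by blast
  then have "card (coset W v) = card (coset W2 vbar)" using v by simp
  then show ?thesis by (simp only: card_coset)
qed

lemma index2: "x \<in> Vsp m b - U \<Longrightarrow> y \<in> Vsp m b - U \<Longrightarrow> xadd x y \<in> U"
proof -
  assume x: "x \<in> Vsp m b - U" and y: "y \<in> Vsp m b - U"
  have sub: "(\<lambda>u. xadd x u) ` U \<subseteq> Vsp m b - U"
  proof
    fix z assume "z \<in> (\<lambda>u. xadd x u) ` U"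
    then obtain u where u: "u \<in> U" "z = xadd x u" by auto
    have "z \<notin> U"
    proof
      assume "z \<in> U"
      then have "xadd z u \<in> U" using u sub_facts(9) by blast
      then show False using u x by (simp add: xadd_assoc)
    qed
    moreover have "u \<in> Vsp m b" using u(1) sub_facts(5) by blast
    ultimately show "z \<in> Vsp m b - U" using u(2) x xadd_Vsp by blast
  qed
  have c1: "card ((\<lambda>u. xadd x u) ` U) = 2 ^ (m * b - 1)"
    using cardU by (subst card_image) (auto simp: inj_on_def)
  have "card (Vsp m b - U) = 2 ^ (m * b) - 2 ^ (m * b - 1)"
    using card_Diff_subset[OF fins(1) sub_facts(5)] card_Vsp cardU by simp
  also have "\<dots> = 2 ^ (m * b - 1)"
  proof -
    have "m * b = Suc (m * b - 1)" using mb by simp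
    then have "(2::nat) ^ (m * b) = 2 * 2 ^ (m * b - 1)" by (metis power_Suc)
    then show ?thesis by simp
  qed
  finally have "(\<lambda>u. xadd x u) ` U = Vsp m b - U"
    using card_subset_eq[OF finite_Diff[OF card_Vsp(2)] sub] c1 by simp
  then obtain u where "u \<in> U" "y = xadd x u" using y by auto
  then show ?thesis by simp
qed

end


context LS begin

definition Si where "Si i = {y \<in> Fm m. emb i y \<in> U}"
definition Wi where "Wi i = {z \<in> Fm m. emb i z \<in> W}"
definition W1i where "W1i i = {z \<in> Fm m. emb i z \<in> W1}"

lemma Wi_sub: "i < b \<Longrightarrow> is_subspace (Fm m) (Wi i)"
  unfolding is_subspace_def Wi_def using sub_facts(4) sub_facts(12) by (auto simp: emb_xadd xadd_Fm)
lemma W1i_sub: "i < b \<Longrightarrow> is_subspace (Fm m) (W1i i)"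
  unfolding is_subspace_def W1i_def using sub_facts(2) sub_facts(10) by (auto simp: emb_xadd xadd_Fm)

lemma pure: "x \<in> Vsp m b \<Longrightarrow> i < b \<Longrightarrow> gm x = emb i w \<Longrightarrow> x = emb i (blk x i)"
proof -
  assume x: "x \<in> Vsp m b" and i: "i < b" and e: "gm x = emb i w"
  show ?thesis
  proof (rule Vsp_eqI[OF x emb_Vsp[OF blk_Vsp[OF x] i]], intro allI impI)
    fix k assume k: "k < b"
    show "blk x k = blk (emb i (blk x i)) k"
    proof (cases "k = i")
      case False
      have "g k (blk x k) = blk (gm x) k" using blk_gm[OF x k] by simp
      also have "\<dots> = g k xzero" using e False g0[OF k] by (simp add: blk_emb)
      finally have "blk x k = xzero" using g_inj[OF k blk_Vsp[OF x]] by simp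
      then show ?thesis using False by (simp add: blk_emb)
    qed (simp add: blk_emb)
  qed
qed

lemma g_W1i: "i < b \<Longrightarrow> g i ` W1i i = Wi i"
proof
  assume i: "i < b"
  show "g i ` W1i i \<subseteq> Wi i"
  proof
    fix w assume "w \<in> g i ` W1i i"
    then obtain z where z: "z \<in> Fm m" "emb i z \<in> W1" "w = g i z" by (auto simp: W1i_def)
    have "gm (emb i z) \<in> W" using gm_W1 z by blast
    then show "w \<in> Wi i" using z gm_emb[OF i] g_Fm[OF i] by (simp add: Wi_def)
  qed
  show "Wi i \<subseteq> g i ` W1i i"
  proof
    fix w assume "w \<in> Wi i"
    then have w: "w \<in> Fm m" "emb i w \<in> W" by (auto simp: Wi_def)
    then have "emb i w \<in> gm ` W1" using gm_W1 by simp
    then obtain x where x: "x \<in> W1" "gm x = emb i w" by (metis imageE)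
    have xV: "x \<in> Vsp m b" using x(1) sub_facts(6) by blast
    have xe: "x = emb i (blk x i)" using pure[OF xV i x(2)] .
    have "g i (blk x i) = w" using blk_gm[OF xV i] x(2) by (simp add: blk_emb)
    moreover have "emb i (blk x i) \<in> W1" using x(1) xe[symmetric] by simp
    then have "blk x i \<in> W1i i" using blk_Vsp[OF xV] by (simp add: W1i_def)
    ultimately show "w \<in> g i ` W1i i" by blast
  qed
qed

lemma anti: "i < b \<Longrightarrow> 2 ^ m \<le> 2 ^ r * card (Wi i) \<Longrightarrow> W1i i = Fm m"
proof -
  assume i: "i < b" and c: "2 ^ m \<le> 2 ^ r * card (Wi i)"
  obtain d where d: "card (Wi i) = 2 ^ d" "sdim (Wi i) = d" using subspace_Fm_pow2[OF Wi_sub[OF i]] by blast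
  have "(2::nat) ^ m \<le> 2 ^ (r + d)" using c d by (simp add: power_add)
  then have "m \<le> r + d" by simp
  moreover have "strongly_anti_invariant m (g i) r" using sai i by blast
  ultimately show ?thesis using W1i_sub[OF i] Wi_sub[OF i] g_W1i[OF i]
    unfolding strongly_anti_invariant_def using d by force
qed

lemma Si_big: "i < b \<Longrightarrow> 2 ^ m \<le> 2 * card (Si i)"
proof -
  assume i: "i < b"
  have finS: "finite (Si i)" using card_Fm(2) by (auto simp: Si_def)
  show ?thesis
  proof (cases "Si i = Fm m")
    case True then show ?thesis using card_Fm by simp
  next
    case False
    then obtain y0 where y0: "y0 \<in> Fm m" "emb i y0 \<notin> U" by (auto simp: Si_def)
    have "Fm m \<subseteq> Si i \<union> (\<lambda>y. xadd y y0) ` Si i"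
    proof
      fix y assume y: "y \<in> Fm m"
      show "y \<in> Si i \<union> (\<lambda>y. xadd y y0) ` Si i"
      proof (cases "emb i y \<in> U")
        case True then show ?thesis using y by (simp add: Si_def)
      next
        case False
        have 1: "emb i y \<in> Vsp m b - U" using emb_Vsp[OF y i] False by simp
        have 2: "emb i y0 \<in> Vsp m b - U" using emb_Vsp[OF y0(1) i] y0(2) by simp
        have "xadd (emb i y) (emb i y0) \<in> U" by (rule index2[OF 1 2])
        then have "xadd y y0 \<in> Si i" using y y0 by (simp add: Si_def emb_xadd xadd_Fm)
        moreover have "y = xadd (xadd y y0) y0" by simp
        ultimately show ?thesis by blast
      qed
    qed
    then have "card (Fm m) \<le> card (Si i \<union> (\<lambda>y. xadd y y0) ` Si i)"
      using finS by (intro card_mono) auto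
    also have "\<dots> \<le> card (Si i) + card ((\<lambda>y. xadd y y0) ` Si i)" by (rule card_Un_le)
    also have "\<dots> \<le> 2 * card (Si i)" using card_image_le[OF finS] by simp
    finally show ?thesis using card_Fm by simp
  qed
qed

lemma du_fib: "i < b \<Longrightarrow> a \<in> Fm m \<Longrightarrow> a \<noteq> xzero \<Longrightarrow> c \<in> Fm m \<Longrightarrow>
   card {x \<in> Fm m. xadd (g i (xadd x a)) (g i x) = c} \<le> 2 ^ r"
proof -
  assume i: "i < b" and a: "a \<in> Fm m" "a \<noteq> xzero" and c: "c \<in> Fm m"
  define M where "M = {card {x \<in> Fm m. xadd (g i (xadd x a)) (g i x) = c} | a c.
                a \<in> Fm m \<and> a \<noteq> xzero \<and> c \<in> Fm m}"
  have eq: "2 ^ r = Max M" using du i unfolding diff_uniform_def M_def by blast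
  have "M \<subseteq> {..card (Fm m)}" unfolding M_def
    using card_Fm(2) by (auto intro!: card_mono)
  then have fM: "finite M" by (rule finite_subset) simp
  have mem: "card {x \<in> Fm m. xadd (g i (xadd x a)) (g i x) = c} \<in> M" unfolding M_def using a c by blast
  show ?thesis using Max_ge[OF fM mem] eq by simp
qed

lemma count_delta:
  assumes i: "i < b" and a: "a \<in> Fm m" "a \<noteq> xzero" and e: "e \<in> Fm m" and A: "A \<subseteq> Fm m"
  shows "card A \<le> 2 ^ r * card ((\<lambda>y. xadd (xadd (g i y) (g i (xadd y a))) e) ` A)"
proof (rule count_fibres)
  show "finite A" using finite_subset[OF A card_Fm(2)] .
  show "\<forall>c\<in>(\<lambda>y. xadd (xadd (g i y) (g i (xadd y a))) e) ` A.
          card {x \<in> A. xadd (xadd (g i x) (g i (xadd x a))) e = c} \<le> 2 ^ r"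
  proof
    fix c assume "c \<in> (\<lambda>y. xadd (xadd (g i y) (g i (xadd y a))) e) ` A"
    then obtain y where y: "y \<in> A" "c = xadd (xadd (g i y) (g i (xadd y a))) e" by blast
    have yF: "y \<in> Fm m" using y(1) A by blast
    have cF: "c \<in> Fm m" unfolding y(2)
      by (rule xadd_Fm[OF xadd_Fm[OF g_Fm[OF i yF] g_Fm[OF i xadd_Fm[OF yF a(1)]]] e])
    have "{x \<in> A. xadd (xadd (g i x) (g i (xadd x a))) e = c} \<subseteq>
          {x \<in> Fm m. xadd (g i (xadd x a)) (g i x) = xadd c e}"
    proof (rule subsetI)
      fix x assume "x \<in> {x \<in> A. xadd (xadd (g i x) (g i (xadd x a))) e = c}"
      then have xA: "x \<in> A" and xc: "xadd (xadd (g i x) (g i (xadd x a))) e = c" by auto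
      have id: "xadd (xadd (xadd p q) e) e = xadd q p" for p q :: "nat \<Rightarrow> bool"
        by (auto simp: xadd_def fun_eq_iff)
      have "xadd c e = xadd (g i (xadd x a)) (g i x)" unfolding xc[symmetric] by (rule id)
      then show "x \<in> {x \<in> Fm m. xadd (g i (xadd x a)) (g i x) = xadd c e}" using xA A by auto
    qed
    then have "card {x \<in> A. xadd (xadd (g i x) (g i (xadd x a))) e = c} \<le>
          card {x \<in> Fm m. xadd (g i (xadd x a)) (g i x) = xadd c e}"
      using card_Fm(2) by (intro card_mono) auto
    also have "\<dots> \<le> 2 ^ r" using du_fib[OF i a xadd_Fm[OF cF e]] .
    finally show "card {x \<in> A. xadd (xadd (g i x) (g i (xadd x a))) e = c} \<le> 2 ^ r" .
  qed
qed

end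


context LS begin

lemma Si_sub: "Si i \<subseteq> Fm m" by (auto simp: Si_def)
lemma Wi_fin: "finite (Wi i)" using card_Fm(2) by (auto simp: Wi_def)

lemma claimD:
  assumes i: "i < b" and a: "a \<in> W1" and nz: "blk a i \<noteq> xzero"
  shows "card (Si i) \<le> 2 ^ r * card (Wi i)"
proof -
  have aV: "a \<in> Vsp m b" using a sub_facts(6) by blast
  define ai where "ai = blk a i"
  have aiF: "ai \<in> Fm m" using blk_Vsp[OF aV] ai_def by simp
  define dl where "dl y = xadd (xadd (g i y) (g i (xadd y ai))) (g i ai)" for y
  have ga: "gm a \<in> W" using sameU[OF sub_facts(1) a] zero by simp
  have "dl y \<in> Wi i" if y: "y \<in> Si i" for y
  proof -
    have yF: "y \<in> Fm m" and yU: "emb i y \<in> U" using y by (auto simp: Si_def)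
    have uV: "emb i y \<in> Vsp m b" using emb_Vsp[OF yF i] .
    have X: "xadd (gm (emb i y)) (gm (xadd (emb i y) a)) \<in> W" using sameU[OF yU a] .
    have XX: "xadd (xadd (gm (emb i y)) (gm (xadd (emb i y) a))) (gm a) \<in> W"
      using sub_facts(12)[OF X ga] .
    have dF: "dl y \<in> Fm m" unfolding dl_def
      by (rule xadd_Fm[OF xadd_Fm[OF g_Fm[OF i yF] g_Fm[OF i xadd_Fm[OF yF aiF]]] g_Fm[OF i aiF]])
    have eq: "xadd (xadd (gm (emb i y)) (gm (xadd (emb i y) a))) (gm a) = emb i (dl y)"
    proof (rule Vsp_eqI)
      show "xadd (xadd (gm (emb i y)) (gm (xadd (emb i y) a))) (gm a) \<in> Vsp m b"
        by (rule xadd_Vsp[OF xadd_Vsp[OF gm_Vsp gm_Vsp] gm_Vsp])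
      show "emb i (dl y) \<in> Vsp m b" using emb_Vsp[OF dF i] .
      show "\<forall>k<b. blk (xadd (xadd (gm (emb i y)) (gm (xadd (emb i y) a))) (gm a)) k = blk (emb i (dl y)) k"
      proof (intro allI impI)
        fix k assume k: "k < b"
        have "blk (xadd (xadd (gm (emb i y)) (gm (xadd (emb i y) a))) (gm a)) k =
          xadd (xadd (g k (blk (emb i y) k)) (g k (xadd (blk (emb i y) k) (blk a k)))) (g k (blk a k))"
          using blk_gm[OF uV k] blk_gm[OF xadd_Vsp[OF uV aV] k] blk_gm[OF aV k] by (simp add: blk_xadd)
        then show "blk (xadd (xadd (gm (emb i y)) (gm (xadd (emb i y) a))) (gm a)) k = blk (emb i (dl y)) k"
          by (simp add: blk_emb dl_def ai_def g0[OF k] xadd_assoc)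
      qed
    qed
    show ?thesis using XX eq dF by (simp add: Wi_def)
  qed
  then have "dl ` Si i \<subseteq> Wi i" by blast
  then have "card (dl ` Si i) \<le> card (Wi i)" using Wi_fin by (rule card_mono[rotated])
  moreover have "card (Si i) \<le> 2 ^ r * card (dl ` Si i)" unfolding dl_def
    using count_delta[OF i aiF nz[folded ai_def] g_Fm[OF i aiF] Si_sub] .
  ultimately show ?thesis by (meson le_trans mult_le_mono2)
qed

lemma rm2: "r + 2 \<le> m" using rm by simp

lemma claimB:
  assumes i: "i < b" and z: "z \<in> W1i i" and znz: "z \<noteq> xzero"
  shows "Si i = Fm m"
proof (rule ccontr)
  assume ne: "Si i \<noteq> Fm m"
  have zF: "z \<in> Fm m" and zW: "emb i z \<in> W1" using z by (auto simp: W1i_def)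
  define dl where "dl y = xadd (g i y) (g i (xadd y z))" for y
  have cnt: "card (Si i) \<le> 2 ^ r * card (dl ` Si i)"
    using count_delta[OF i zF znz xzero_Fm Si_sub] by (simp add: dl_def)
  have dW: "dl y \<in> Wi i \<and> dl y \<noteq> xzero" if y: "y \<in> Si i" for y
  proof -
    have yF: "y \<in> Fm m" and yU: "emb i y \<in> U" using y by (auto simp: Si_def)
    have "xadd (gm (emb i y)) (gm (xadd (emb i y) (emb i z))) \<in> W" using sameU[OF yU zW] .
    then have "emb i (dl y) \<in> W" unfolding dl_def
      using gm_emb[OF i yF] gm_emb[OF i xadd_Fm[OF yF zF]] by (simp add: emb_xadd)
    moreover have "dl y \<in> Fm m" unfolding dl_def
      by (rule xadd_Fm[OF g_Fm[OF i yF] g_Fm[OF i xadd_Fm[OF yF zF]]])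
    moreover have "dl y \<noteq> xzero"
    proof
      assume "dl y = xzero"
      then have "g i y = g i (xadd y z)" unfolding dl_def by (simp add: xadd_eq_zero)
      then have "y = xadd y z" using g_inj[OF i yF xadd_Fm[OF yF zF]] by simp
      then have "xadd y y = xadd y (xadd y z)" by simp
      then show False using znz by simp
    qed
    ultimately show ?thesis by (simp add: Wi_def)
  qed
  have s1: "dl ` Si i \<subseteq> Wi i"
  proof (rule subsetI)
    fix w assume "w \<in> dl ` Si i"
    then obtain y where y: "y \<in> Si i" "w = dl y" by (rule imageE)
    show "w \<in> Wi i" using conjunct1[OF dW[OF y(1)]] y(2) by simp
  qed
  have s2: "xzero \<in> Wi i" unfolding Wi_def using sub_facts(4) xzero_Fm by simp
  have sub: "insert xzero (dl ` Si i) \<subseteq> Wi i" using s2 s1 by (simp only: insert_subset)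
  have nin: "xzero \<notin> dl ` Si i"
  proof
    assume "xzero \<in> dl ` Si i"
    then obtain y where y: "y \<in> Si i" "xzero = dl y" by (rule imageE)
    show False using conjunct2[OF dW[OF y(1)]] y(2) by simp
  qed
  have finD: "finite (dl ` Si i)" using finite_subset[OF Si_sub card_Fm(2)] by (rule finite_imageI)
  obtain d where d: "card (Wi i) = 2 ^ d" "sdim (Wi i) = d" using subspace_Fm_pow2[OF Wi_sub[OF i]] by blast
  have "card (dl ` Si i) + 1 \<le> card (Wi i)"
    using card_mono[OF Wi_fin sub] nin finD by simp
  then have lt: "card (dl ` Si i) < 2 ^ d" using d by simp
  have mm: "m = (r + 1) + (m - r - 1)" using rm2 by simp
  have p: "(2::nat) ^ m = 2 ^ (r + 1) * 2 ^ (m - r - 1)"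
    using power_add[of "2::nat" "r + 1" "m - r - 1"] unfolding mm[symmetric] .
  have "2 * card (Si i) \<le> 2 * (2 ^ r * card (dl ` Si i))" using cnt by simp
  then have q: "2 ^ m \<le> 2 ^ (r + 1) * card (dl ` Si i)" using Si_big[OF i] by simp
  have "2 ^ (r + 1) * 2 ^ (m - r - 1) \<le> 2 ^ (r + 1) * card (dl ` Si i)" using p q by simp
  then have "2 ^ (m - r - 1) \<le> card (dl ` Si i)" by simp
  then have "(2::nat) ^ (m - r - 1) < 2 ^ d" using lt by (rule le_less_trans)
  then have "m - r - 1 < d" by simp
  then have mrd: "m \<le> r + d" by simp
  have "(2::nat) ^ m \<le> 2 ^ (r + d)" using mrd by simp
  also have "\<dots> = 2 ^ r * card (Wi i)" using d by (simp add: power_add)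
  finally have "(2::nat) ^ m \<le> 2 ^ r * card (Wi i)" .
  then have "W1i i = Fm m" using anti[OF i] by blast
  moreover have "W1i i \<subseteq> Si i" using W1U by (auto simp: W1i_def Si_def)
  ultimately show False using ne Si_sub by blast
qed

lemma claimA:
  assumes i: "i < b" and a: "a \<in> W1" and nz: "blk a i \<noteq> xzero"
  shows "\<exists>z\<in>W1i i. z \<noteq> xzero"
proof -
  have c: "2 ^ m \<le> 2 * (2 ^ r * card (Wi i))" using claimD[OF i a nz] Si_big[OF i] by linarith
  have "\<exists>w\<in>Wi i. w \<noteq> xzero"
  proof (rule ccontr)
    assume "\<not> ?thesis"
    then have "Wi i \<subseteq> {xzero}" by blast
    then have "card (Wi i) \<le> card {xzero}" using card_mono[of "{xzero}" "Wi i"] by simp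
    then have "card (Wi i) \<le> 1" by simp
    then have "2 * (2 ^ r * card (Wi i)) \<le> 2 * (2 ^ r * 1)" by simp
    then have "(2::nat) ^ m \<le> 2 * (2 ^ r * 1)" by (rule le_trans[OF c])
    then have h: "(2::nat) ^ m \<le> 2 ^ (Suc r)" by simp
    have "m \<le> Suc r" using power_le_imp_le_exp[OF _ h] by simp
    then show False using rm2 by simp
  qed
  then obtain w where w: "w \<in> Wi i" "w \<noteq> xzero" by blast
  have "w \<in> g i ` W1i i" using w(1) g_W1i[OF i] by simp
  then obtain z where z: "w = g i z" "z \<in> W1i i" by (rule imageE)
  have "z \<noteq> xzero"
  proof
    assume "z = xzero"
    then have "w = xzero" using z(1) g0[OF i] by simp
    then show False using w(2) by simp
  qed
  then show ?thesis using z(2) by blast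
qed

lemma claimC:
  assumes i: "i < b" and a: "a \<in> W1" and nz: "blk a i \<noteq> xzero"
  shows "Si i = Fm m" "W1i i = Fm m"
proof -
  show S: "Si i = Fm m" using claimA[OF i a nz] claimB[OF i] by blast
  have "card (Si i) \<le> 2 ^ r * card (Wi i)" by (rule claimD[OF i a nz])
  then have "2 ^ m \<le> 2 ^ r * card (Wi i)" using S card_Fm(1) by simp
  then show "W1i i = Fm m" by (rule anti[OF i])
qed

definition II where "II = {i. i < b \<and> (\<exists>a\<in>W1. blk a i \<noteq> xzero)}"
definition wset where "wset = {v \<in> Vsp m b. \<forall>i j. i \<notin> II \<longrightarrow> \<not> v (i, j)}"

lemma W1_wset: "W1 = wset"
proof
  show "W1 \<subseteq> wset"
  proof
    fix a assume a: "a \<in> W1"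
    have aV: "a \<in> Vsp m b" using a sub_facts(6) by blast
    have "\<not> a (i, j)" if "i \<notin> II" for i j
    proof (cases "i < b")
      case True
      then have "blk a i = xzero" using that a by (auto simp: II_def)
      then show ?thesis by (simp add: blk_zero_iff)
    next
      case False
      then have "blk a i = xzero" using blk_Vsp_out[OF aV] by simp
      then show ?thesis by (simp add: blk_zero_iff)
    qed
    then show "a \<in> wset" using aV by (simp add: wset_def)
  qed
  show "wset \<subseteq> W1"
  proof
    fix v assume v: "v \<in> wset"
    have vV: "v \<in> Vsp m b" using v by (simp add: wset_def)
    show "v \<in> W1"
    proof (rule Vsp_decomp[OF vV sub_facts(2)], intro ballI sub_facts(10), assumption+, intro allI impI)
      fix k assume k: "k < b"
      show "emb k (blk v k) \<in> W1"
      proof (cases "k \<in> II")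
        case True
        then obtain a where "a \<in> W1" "blk a k \<noteq> xzero" by (auto simp: II_def)
        then have "W1i k = Fm m" using claimC[OF k] by blast
        then show ?thesis using blk_Vsp[OF vV] by (auto simp: W1i_def)
      next
        case False
        then have "blk v k = xzero" using v by (simp add: wset_def blk_zero_iff)
        then show ?thesis using sub_facts(2) by simp
      qed
    qed
  qed
qed

lemma W_eq: "W = W1"
proof -
  have "gm ` W1 \<subseteq> W1"
  proof
    fix x assume "x \<in> gm ` W1"
    then obtain v where v: "v \<in> W1" "x = gm v" by blast
    have vV: "v \<in> Vsp m b" using v(1) sub_facts(6) by blast
    have "\<not> gm v (i, j)" if "i \<notin> II" for i j
    proof (cases "i < b")
      case True
      have "v \<in> wset" using v(1) W1_wset by simp
      then have "\<forall>j. \<not> v (i, j)" using that unfolding wset_def by blast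
      then have "blk v i = xzero" by (simp add: blk_zero_iff)
      then have "blk (gm v) i = xzero" using blk_gm[OF vV True] g0[OF True] by simp
      then show ?thesis by (simp add: blk_zero_iff)
    next
      case False
      then have "blk (gm v) i = xzero" using blk_Vsp_out[OF gm_Vsp] by simp
      then show ?thesis by (simp add: blk_zero_iff)
    qed
    then have "x \<in> wset" using v(2) gm_Vsp by (simp add: wset_def)
    then show "x \<in> W1" using W1_wset by simp
  qed
  then have "W \<subseteq> W1" using gm_W1 by simp
  show ?thesis by (rule card_subset_eq[OF fins(2) \<open>W \<subseteq> W1\<close>]) (simp add: card_W1)
qed

lemma W2_eq: "W2 = W1"
proof -
  have "W2 \<subseteq> wset"
  proof
    fix a assume a: "a \<in> W2"
    have aV: "a \<in> Vsp m b" using a sub_facts(7) by blast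
    have X: "xadd (gm vbar) (gm (xadd vbar a)) \<in> wset" using sameW2[OF a] W_eq W1_wset by simp
    have "\<not> a (i, j)" if "i \<notin> II" for i j
    proof (cases "i < b")
      case True
      have "blk (xadd (gm vbar) (gm (xadd vbar a))) i = xzero"
        using X that by (simp add: wset_def blk_zero_iff)
      then have "g i (blk vbar i) = g i (xadd (blk vbar i) (blk a i))"
        using blk_gm[OF vbar(1) True] blk_gm[OF xadd_Vsp[OF vbar(1) aV] True]
        by (simp add: blk_xadd xadd_eq_zero)
      then have "blk vbar i = xadd (blk vbar i) (blk a i)"
        by (rule g_inj[OF True blk_Vsp[OF vbar(1)] xadd_Fm[OF blk_Vsp[OF vbar(1)] blk_Vsp[OF aV]]])
      then have "xadd (blk vbar i) (blk vbar i) = xadd (blk vbar i) (xadd (blk vbar i) (blk a i))" by simp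
      then have "blk a i = xzero" by simp
      then show ?thesis by (simp add: blk_zero_iff)
    next
      case False
      then have "blk a i = xzero" using blk_Vsp_out[OF aV] by simp
      then show ?thesis by (simp add: blk_zero_iff)
    qed
    then show "a \<in> wset" using aV by (simp add: wset_def)
  qed
  then have "W2 \<subseteq> W1" using W1_wset by simp
  then show ?thesis by (rule card_subset_eq[OF fins(2)]) (simp add: card_W2 card_W1)
qed

lemma J_ne: "\<exists>i<b. Si i \<noteq> Fm m"
proof (rule ccontr)
  assume "\<not> ?thesis"
  then have all: "\<forall>i<b. Si i = Fm m" by blast
  have "vbar \<in> U"
  proof (rule Vsp_decomp[OF vbar(1) sub_facts(1)], intro ballI sub_facts(9), assumption+, intro allI impI)
    fix k assume k: "k < b"
    have "blk vbar k \<in> Si k" using all k blk_Vsp[OF vbar(1)] by simp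
    then show "emb k (blk vbar k) \<in> U" by (simp add: Si_def)
  qed
  then show False using vbar by blast
qed

lemma wall_W1: "wall m b W1"
  unfolding wall_def
proof (intro exI conjI)
  show "W1 = {v \<in> Vsp m b. \<forall>i j. i \<notin> II \<longrightarrow> \<not> v (i, j)}" using W1_wset by (simp add: wset_def)
  show "II \<noteq> {}"
  proof
    assume e: "II = {}"
    have "W1 \<subseteq> {xzero}"
    proof
      fix a assume a: "a \<in> W1"
      have aV: "a \<in> Vsp m b" using a sub_facts(6) by blast
      have "a = xzero" using e a by (intro Vsp_eqI[OF aV xzero_Vsp]) (auto simp: II_def)
      then show "a \<in> {xzero}" by simp
    qed
    then have "W \<subseteq> {xzero}" using W_eq by simp
    then show False using Wnz sub_facts(4) by blast
  qed
  obtain j where j: "j < b" "Si j \<noteq> Fm m" using J_ne by blast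
  then have "j \<notin> II" using claimC(1) by (auto simp: II_def)
  then show "II \<subset> {..<b}" using j by (auto simp: II_def)
qed

lemma LA_eq: "LA m b U W1 W2 = Lpart m b W1"
proof -
  have vb: "(SOME x. x \<in> Vsp m b - U) = vbar" by (simp add: vbar_def)
  show ?thesis
    unfolding LA_def Let_def vb W2_eq coset_coset Lpart_def
  proof (rule set_eqI, rule iffI)
    fix B assume "B \<in> {coset W1 v |v. v \<in> U} \<union> {coset W1 (xadd vbar v) |v. v \<in> U}"
    then obtain v where v: "v \<in> U" "B = coset W1 v \<or> B = coset W1 (xadd vbar v)" by blast
    have vV: "v \<in> Vsp m b" using v(1) sub_facts(5) by blast
    have "xadd vbar v \<in> Vsp m b" by (rule xadd_Vsp[OF vbar(1) vV])
    note vV this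
    then show "B \<in> {coset W1 v |v. v \<in> Vsp m b}" using v(2) by blast
  next
    fix B assume "B \<in> {coset W1 v |v. v \<in> Vsp m b}"
    then obtain v where v: "v \<in> Vsp m b" "B = coset W1 v" by blast
    show "B \<in> {coset W1 v |v. v \<in> U} \<union> {coset W1 (xadd vbar v) |v. v \<in> U}"
    proof (cases "v \<in> U")
      case True then show ?thesis using v by blast
    next
      case False
      then have "xadd vbar v \<in> U" using index2[of vbar v] v(1) vbar by blast
      moreover have "B = coset W1 (xadd vbar (xadd vbar v))" using v by simp
      ultimately show ?thesis by blast
    qed
  qed
qed

end

theorem lemma3p10:
  fixes m b r :: nat
    and g :: "nat \<Rightarrow> (nat \<Rightarrow> bool) \<Rightarrow> (nat \<Rightarrow> bool)"
    and U W1 W2 W :: "(nat \<times> nat \<Rightarrow> bool) set"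
  assumes "1 < m" and "1 < b"
    and perm: "\<forall>i<b. bij_betw (g i) (Fm m) (Fm m)"
    and zero: "parmap m b g xzero = xzero"
    and du: "\<forall>i<b. diff_uniform m (g i) (2 ^ r)"
    and rm: "r < m - 1"
    and sai: "\<forall>i<b. strongly_anti_invariant m (g i) r"
    and U: "is_subspace (Vsp m b) U" "sdim U = m * b - 1"
    and W12: "is_subspace (Vsp m b) W1" "W1 \<subseteq> U" "is_subspace (Vsp m b) W2" "W2 \<subseteq> U"
    and W: "is_subspace (Vsp m b) W" "W \<noteq> {xzero}" "W \<noteq> Vsp m b"
    and maps: "maps_onto (parmap m b g) (LA m b U W1 W2) (Lpart m b W)"
  shows "wall m b W1 \<and> wall m b W2 \<and> wall m b W \<and> W1 = W2 \<and> W2 = W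
         \<and> LA m b U W1 W2 = Lpart m b W1"
  proof -
  interpret LS m b r g U W1 W2 W by (rule LS.intro[OF assms])
  show ?thesis using wall_W1 W_eq W2_eq LA_eq by simp
qed

end
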